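(* For $I\subseteq\{0,\dots,n\}$ and $u,v\in U^I$, $$\mathrm{ord}_p\,\theta_{0,qu-v}(\hat\lambda)\ge\frac{pu_{n+1}-v_{n+1}}{p-1}+(a-1)(\mu_I+1).$$
   Context: $p$ prime, $a\ge1$, $q=p^a$, $n\ge1$, $d\ge2$; ${\bf a}_1,\dots,{\bf a}_N\in\mathbb{N}^{n+1}$ with coordinate sums $d$, ${\bf a}_j^+=({\bf a}_j,1)\in\mathbb{N}^{n+2}$. $\mu_I$ is defined by $\lceil|I|/d\rceil=\mu_I+1$; $U^I$ is the set of $u\in\mathbb{N}^{n+2}$ with $\sum_{i=0}^nu_i=du_{n+1}$ and $u_i>0$ for $i\in I$. $\mathrm{ord}_p$ is normalized by $\mathrm{ord}_p\,p=1$. $\gamma_0$ is a zero of $\sum_{i\ge0}t^{p^i}/p^i$ with $\mathrm{ord}_p\gamma_0=1/(p-1)$; $\theta(t)=\mathrm{AH}(\gamma_0t)$ with $\mathrm{AH}(t)=\exp(\sum_{i\ge0}t^{p^i}/p^i)$. For $\lambda\in\mathbb{F}_q^N$ with Teichmüller lifting $\hat\lambda$, set $\theta(\hat\lambda,x)=\prod_{j=1}^N\theta(\hat\lambda_jx^{{\bf a}_j^+})$ and $\theta_0(\hat\lambda,x)=\prod_{i=0}^{a-1}\theta(\hat\lambda^{p^i},x^{p^i})$ (powers componentwise), and write $\theta_0(\hat\lambda,x)=\sum_w\theta_{0,w}(\hat\lambda)x^w$ ($\theta_{0,w}=0$ if $x^w$ does not occur). *)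

theory Defs
  imports Complex_Main "HOL-Library.Extended_Real" "HOL-Computational_Algebra.Formal_Power_Series"
begin

definition is_ord_p :: "nat \<Rightarrow> ('k::field_char_0 \<Rightarrow> ereal) \<Rightarrow> bool" where
  "is_ord_p p ord \<longleftrightarrow>
     (\<forall>x. ord x = \<infinity> \<longleftrightarrow> x = 0) \<and>
     (\<forall>x. ord x \<noteq> - \<infinity>) \<and>
     (\<forall>x y. ord (x * y) = ord x + ord y) \<and>
     (\<forall>x y. ord (x + y) \<ge> min (ord x) (ord y)) \<and>
     ord (of_nat p) = 1"

definition AH_log :: "nat \<Rightarrow> rat fps" where
  "AH_log p = Abs_fps (\<lambda>k. if (\<exists>i. k = p ^ i) then 1 / of_nat k else 0)"

definition AH :: "nat \<Rightarrow> rat fps" where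
  "AH p = fps_exp 1 oo AH_log p"

text \<open>gamma0 is a zero of sum_i t^(p^i)/p^i (convergence w.r.t. ord) with ord gamma0 = 1/(p-1).\<close>
definition is_gamma0 :: "nat \<Rightarrow> ('k::field_char_0 \<Rightarrow> ereal) \<Rightarrow> 'k \<Rightarrow> bool" where
  "is_gamma0 p ord g \<longleftrightarrow>
     ord g = ereal (1 / (real p - 1)) \<and>
     (\<forall>M::real. \<exists>m0. \<forall>m\<ge>m0.
        ord (\<Sum>i<m. g ^ (p ^ i) / of_nat (p ^ i)) \<ge> ereal M)"

text \<open>a_j^+ = (a_j, 1), coordinates 0..n+1; exponent vectors A j (j < N), coordinates 0..n.\<close>
definition Aplus :: "nat \<Rightarrow> (nat \<Rightarrow> nat \<Rightarrow> nat) \<Rightarrow> nat \<Rightarrow> nat \<Rightarrow> nat" where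
  "Aplus n A j l = (if l = n + 1 then 1 else A j l)"

text \<open>Coefficient theta_{0,w}(lambda-hat) of x^w in
  theta_0(lambda-hat,x) = prod_{i<a} prod_{j<N} theta(lambda-hat_j^(p^i) x^(p^i a_j^+)),
  theta(t) = AH(gamma0 t) = sum_k AH_k gamma0^k t^k.  A monomial is given by k(i,j)
  (the power of the (i,j)-th factor); w ranges over Z^(n+2) (coefficient 0 if x^w does not occur).\<close>
definition theta0_coeff ::
  "nat \<Rightarrow> nat \<Rightarrow> nat \<Rightarrow> nat \<Rightarrow> (nat \<Rightarrow> nat \<Rightarrow> nat) \<Rightarrow> 'k::field_char_0 \<Rightarrow> (nat \<Rightarrow> 'k)
     \<Rightarrow> (nat \<Rightarrow> int) \<Rightarrow> 'k" where
  "theta0_coeff p a n N A g lam w =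
     (\<Sum>k\<in>{k :: nat \<times> nat \<Rightarrow> nat.
            (\<forall>i j. k (i, j) \<noteq> 0 \<longrightarrow> i < a \<and> j < N) \<and>
            (\<forall>l\<le>n+1. (\<Sum>i<a. \<Sum>j<N. int (k (i, j) * p ^ i * Aplus n A j l)) = w l)}.
        \<Prod>i<a. \<Prod>j<N. of_rat (fps_nth (AH p) (k (i, j))) * g ^ k (i, j)
                         * lam j ^ (k (i, j) * p ^ i))"

definition mu :: "nat \<Rightarrow> nat set \<Rightarrow> int" where
  "mu d I = \<lceil>real (card I) / real d\<rceil> - 1"

definition U :: "nat \<Rightarrow> nat \<Rightarrow> nat set \<Rightarrow> (nat \<Rightarrow> nat) set" where
  "U n d I = {u. (\<forall>l>n+1. u l = 0) \<and> (\<Sum>i\<le>n. u i) = d * u (n+1) \<and> (\<forall>i\<in>I. u i > 0)}"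

end

theory Submission
  imports Defs "HOL-Number_Theory.Number_Theory"
begin

unbundle fps_syntax

definition pint :: "nat \<Rightarrow> rat \<Rightarrow> bool" where
  "pint p x \<longleftrightarrow> (\<exists>a b::int. \<not> int p dvd b \<and> x = of_int a / of_int b)"

definition cong0 :: "nat \<Rightarrow> rat \<Rightarrow> bool" where
  "cong0 p x \<longleftrightarrow> pint p (x / of_nat p)"

context fixes p :: nat assumes pp: "prime p" begin

lemma pprime_int: "prime (int p)" using pp by simp

lemma pint_of_int[simp]: "pint p (of_int z)"
  unfolding pint_def using pp
  by (rule_tac x=z in exI, rule_tac x=1 in exI) (auto simp: prime_gt_1_nat)

lemma pint_of_nat[simp]: "pint p (of_nat z)"
  using pint_of_int[of "int z"] by simp

lemma pint_0[simp]: "pint p 0" using pint_of_int[of 0] by simp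
lemma pint_1[simp]: "pint p 1" using pint_of_int[of 1] by simp

lemma pint_add[intro]: assumes "pint p x" "pint p y" shows "pint p (x + y)"
proof -
  obtain a b where ab: "\<not> int p dvd b" "x = of_int a / of_int b" using assms(1) pint_def by auto
  obtain c d where cd: "\<not> int p dvd d" "y = of_int c / of_int d" using assms(2) pint_def by auto
  have b0: "b \<noteq> 0" "d \<noteq> 0" using ab cd by auto
  have "\<not> int p dvd (b*d)" using ab cd pprime_int by (simp add: prime_dvd_mult_iff)
  moreover have "x + y = of_int (a*d + c*b) / of_int (b*d)"
    using ab cd b0 by (simp add: field_simps)
  ultimately show ?thesis unfolding pint_def by blast
qed

lemma pint_mult[intro]: assumes "pint p x" "pint p y" shows "pint p (x * y)"
proof -
  obtain a b where ab: "\<not> int p dvd b" "x = of_int a / of_int b" using assms(1) pint_def by auto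
  obtain c d where cd: "\<not> int p dvd d" "y = of_int c / of_int d" using assms(2) pint_def by auto
  have "\<not> int p dvd (b*d)" using ab cd pprime_int by (simp add: prime_dvd_mult_iff)
  moreover have "x * y = of_int (a*c) / of_int (b*d)"
    using ab cd by (simp add: field_simps)
  ultimately show ?thesis unfolding pint_def by blast
qed

lemma pint_uminus[intro]: assumes "pint p x" shows "pint p (- x)"
  using pint_mult[OF pint_of_int[of "-1"] assms] by simp

lemma pint_diff[intro]: "pint p x \<Longrightarrow> pint p y \<Longrightarrow> pint p (x - y)"
  using pint_add[of x "-y"] pint_uminus by auto

lemma pint_sum[intro]: "(\<And>i. i \<in> S \<Longrightarrow> pint p (f i)) \<Longrightarrow> pint p (sum f S)"
  by (induction S rule: infinite_finite_induct) auto

lemma pint_power[intro]: "pint p x \<Longrightarrow> pint p (x ^ k)"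
  by (induction k) auto

lemma cong0_add[intro]: "cong0 p x \<Longrightarrow> cong0 p y \<Longrightarrow> cong0 p (x + y)"
  unfolding cong0_def by (metis add_divide_distrib pint_add)
lemma cong0_diff[intro]: "cong0 p x \<Longrightarrow> cong0 p y \<Longrightarrow> cong0 p (x - y)"
  unfolding cong0_def by (metis diff_divide_distrib pint_diff)
lemma cong0_0[simp]: "cong0 p 0" unfolding cong0_def by simp
lemma cong0_sum[intro]: "(\<And>i. i \<in> S \<Longrightarrow> cong0 p (f i)) \<Longrightarrow> cong0 p (sum f S)"
  by (induction S rule: infinite_finite_induct) auto
lemma cong0_mult[intro]: "cong0 p x \<Longrightarrow> pint p y \<Longrightarrow> cong0 p (x * y)"
  unfolding cong0_def by (metis pint_mult times_divide_eq_left)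
lemma cong0_mult'[intro]: "pint p y \<Longrightarrow> cong0 p x \<Longrightarrow> cong0 p (y * x)"
  using cong0_mult by (simp add: mult.commute)
lemma cong0_p_mult[intro]: "pint p y \<Longrightarrow> cong0 p (of_nat p * y)"
  unfolding cong0_def using pp by (simp add: prime_gt_0_nat)
lemma cong0_pint: assumes "cong0 p x" shows "pint p x"
proof -
  have "pint p (of_nat p * (x / of_nat p))" using assms unfolding cong0_def by (intro pint_mult) auto
  moreover have "of_nat p * (x / of_nat p) = x" using pp by (simp add: prime_gt_0_nat)
  ultimately show ?thesis by simp
qed
lemma cong0_of_nat_dvd: "p dvd m \<Longrightarrow> pint p y \<Longrightarrow> cong0 p (of_nat m * y)"
proof -
  assume "p dvd m" "pint p y"
  then obtain r where "m = p * r" by (auto elim!: dvdE)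
  then have "of_nat m * y = of_nat p * (of_nat r * y)" by simp
  then show ?thesis using cong0_p_mult[of "of_nat r * y"] \<open>pint p y\<close> by (metis pint_mult pint_of_nat)
qed
lemma cong0_div: "cong0 p (of_nat p * x) \<Longrightarrow> pint p x"
  unfolding cong0_def using pp by (simp add: prime_gt_0_nat)

lemma fermat_pint: assumes "pint p x" shows "cong0 p (x ^ p - x)"
proof -
  obtain a b where ab: "\<not> int p dvd b" "x = of_int a / of_int b" using assms pint_def by auto
  have b0: "b \<noteq> 0" using ab by auto
  have fa: "[a ^ p = a] (mod int p)" for a :: int
  proof -
    define r where "r = nat (a mod int p)"
    have p0: "p > 0" using pp prime_gt_0_nat by blast
    have ar: "[a = int r] (mod int p)" unfolding r_def using p0
      by (simp add: cong_def)
    have rp: "r < p" unfolding r_def using p0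
      by (simp add: nat_less_iff)
    have "[r ^ p = r] (mod p)"
    proof (cases "p dvd r")
      case True then have "r = 0" using rp by (metis dvd_imp_le gr0I not_less)
      then show ?thesis using p0 by (simp add: zero_power)
    next
      case False
      then have "[r ^ (p-1) = 1] (mod p)" using fermat_theorem pp by blast
      then have "[r * r ^ (p-1) = r * 1] (mod p)" by (intro cong_mult cong_refl)
      moreover have "r * r ^ (p-1) = r ^ p" using p0
        by (metis Suc_diff_1 power_Suc)
      ultimately show ?thesis by simp
    qed
    then have "[int (r ^ p) = int r] (mod int p)" using cong_int_iff by blast
    then have "[(int r) ^ p = int r] (mod int p)" by simp
    moreover have "[a ^ p = (int r) ^ p] (mod int p)" using ar by (rule cong_pow)
    ultimately show ?thesis using ar by (metis cong_sym cong_trans)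
  qed
  have "[a^p * b - a * b^p = a * b - a * b] (mod int p)"
    by (intro cong_diff cong_mult fa cong_refl)
  then have "int p dvd (a^p * b - a * b^p)" by (simp add: cong_0_iff)
  then obtain c where c: "a^p * b - a * b^p = int p * c" by (auto elim!: dvdE)
  have "x ^ p - x = of_int (a^p*b - a*b^p) / of_int (b^(p+1))"
    using b0 unfolding ab(2) by (simp add: field_simps)
  also have "\<dots> = of_nat p * (of_int c / of_int (b^(p+1)))" by (simp add: c)
  finally have "x ^ p - x = of_nat p * (of_int c / of_int (b^(p+1)))" .
  moreover have "\<not> int p dvd b^(p+1)" using ab pprime_int
    by (metis prime_dvd_power)
  ultimately show ?thesis using cong0_p_mult unfolding pint_def by metis
qed


lemma p2: "p \<ge> 2" using pp prime_ge_2_nat by blast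

lemma fact_decomp: "\<exists>c. fact k = p^(k div p) * fact (k div p) * c \<and> \<not> p dvd c"
proof (induction k)
  case 0 then show ?case using p2 by (intro exI[of _ 1]) auto
next
  case (Suc k)
  then obtain c where c: "fact k = p^(k div p) * fact (k div p) * c" "\<not> p dvd c" by blast
  show ?case
  proof (cases "Suc k mod p = 0")
    case True
    then have d: "Suc k div p = Suc (k div p)" by (simp add: div_Suc)
    have sk: "Suc k = p * Suc (k div p)" using True d
      by (metis div_mult_mod_eq add.right_neutral mult.commute)
    have "fact (Suc k) = Suc k * fact k" by simp
    also have "\<dots> = p^(Suc k div p) * fact (Suc k div p) * c"
      unfolding c(1) d by (subst sk) (simp add: algebra_simps)
    finally show ?thesis using c(2) by blast
  next
    case False
    then have d: "Suc k div p = k div p" by (simp add: div_Suc)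
    have nd: "\<not> p dvd Suc k" using False by (simp add: dvd_eq_mod_eq_0)
    have "fact (Suc k) = p^(Suc k div p) * fact (Suc k div p) * (Suc k * c)"
      unfolding d by (simp add: c(1) algebra_simps)
    moreover have "\<not> p dvd (Suc k * c)" using nd c(2) pp by (metis prime_dvd_mult_iff)
    ultimately show ?thesis by blast
  qed
qed

lemma fact_pval: "\<exists>e c. fact k = p^e * c \<and> \<not> p dvd c \<and> (k > 0 \<longrightarrow> e < k)"
proof (induction k rule: less_induct)
  case (less k)
  show ?case
  proof (cases "k = 0")
    case True then show ?thesis using p2 by (intro exI[of _ 0] exI[of _ 1]) auto
  next
    case False
    define m where "m = k div p"
    obtain c where c: "fact k = p^m * fact m * c" "\<not> p dvd c" using fact_decomp m_def by blast
    show ?thesis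
    proof (cases "m = 0")
      case True then show ?thesis using c False by (intro exI[of _ 0] exI[of _ c]) auto
    next
      case m0: False
      have mk: "m < k" unfolding m_def using False p2 by simp
      obtain e c' where e: "fact m = p^e * c'" "\<not> p dvd c'" "e < m" using less(1)[OF mk] m0 by blast
      have "p * m \<le> k" unfolding m_def by (rule times_div_less_eq_dividend)
      moreover have "2 * m \<le> p * m" using p2 by simp
      ultimately have "m + e < k" using e(3) by linarith
      moreover have "fact k = p^(m+e) * (c' * c)" by (simp add: c(1) e(1) power_add algebra_simps)
      moreover have "\<not> p dvd (c' * c)" using c(2) e(2) pp by (simp add: prime_dvd_mult_iff)
      ultimately show ?thesis by blast
    qed
  qed
qed

lemma E_cong: assumes "k > 0" shows "cong0 p ((of_nat p)^k / of_nat (fact k) :: rat)"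
proof -
  obtain e c where ec: "fact k = p^e * c" "\<not> p dvd c" "e < k" using fact_pval assms by blast
  have c0: "c \<noteq> 0" using ec(1) by (metis fact_nonzero mult_0_right)
  have p0: "p > 0" using p2 by simp
  have kk: "k = (k - 1 - e) + e + 1" using ec(3) by simp
  have "(of_nat p)^k / of_nat (fact k) / of_nat p = (of_nat p ^ (k-1-e) / of_nat c :: rat)"
    apply (subst kk) using c0 p0 unfolding ec(1) by (simp add: power_add field_simps)
  also have "\<dots> = of_int (int p ^ (k-1-e)) / of_int (int c)" by simp
  finally show ?thesis unfolding cong0_def pint_def using ec(2)
    by (metis int_dvd_int_iff)
qed

definition pser :: "rat fps \<Rightarrow> bool" where "pser f \<longleftrightarrow> (\<forall>m. pint p (f$m))"

lemma pser_mult: "pser f \<Longrightarrow> pser g \<Longrightarrow> pser (f * g)"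
  unfolding pser_def fps_mult_nth by (auto intro!: pint_sum pint_mult)
lemma pser_1: "pser 1" unfolding pser_def by (simp add: fps_one_nth)
lemma pser_power: "pser f \<Longrightarrow> pser (f ^ k)"
proof (induction k)
  case 0 then show ?case using pser_1 by simp
next
  case (Suc k) then show ?case by (simp add: pser_mult)
qed
lemma pser_const: "pint p c \<Longrightarrow> pser (fps_const c)"
  unfolding pser_def by auto
lemma pser_X_power: "pser (fps_X ^ k)"
  unfolding pser_def by auto

lemma comp_Y_nth: fixes g :: "rat fps" assumes q: "q > 0"
  shows "(g oo fps_X^q) $ m = (if q dvd m then g $ (m div q) else 0)"
proof -
  have "(g oo fps_X^q) $ m = (\<Sum>i=0..m. (if i = m div q \<and> q dvd m then g$i else 0))"
    unfolding fps_compose_nth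
  proof (rule sum.cong[OF refl])
    fix i assume "i \<in> {0..m}"
    have "(fps_X ^ q) ^ i = (fps_X ^ (q*i) :: rat fps)" by (simp add: power_mult)
    moreover have "(m = q * i) \<longleftrightarrow> (i = m div q \<and> q dvd m)" using q by auto
    ultimately show "g $ i * ((fps_X ^ q) ^ i) $ m = (if i = m div q \<and> q dvd m then g$i else 0)"
      by auto
  qed
  also have "\<dots> = (if q dvd m then g $ (m div q) else 0)"
    using q by (auto simp: sum.delta' div_le_dividend)
  finally show ?thesis .
qed

end

lemma ring_pow_expand: fixes F Q :: "'a::comm_ring_1"
  shows "\<exists>G. (F+Q)^k = F^k + of_nat k * Q * F^(k-1) + Q^2 * G"
proof (induction k)
  case 0 then show ?case by (intro exI[of _ 0]) simp
next
  case (Suc k)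
  then obtain G where G: "(F+Q)^k = F^k + of_nat k * Q * F^(k-1) + Q^2 * G" by blast
  show ?case
  proof (cases k)
    case 0 then show ?thesis by (intro exI[of _ 0]) simp
  next
    case (Suc j)
    have "(F+Q)^Suc k = (F+Q) * (F^k + of_nat k * Q * F^(k-1) + Q^2 * G)" using G by simp
    also have "\<dots> = F^Suc k + of_nat (Suc k) * Q * F^(Suc k - 1) + Q^2 * (G*F + of_nat k * F^j + Q*G)"
      unfolding Suc by (simp add: algebra_simps power2_eq_square)
    finally show ?thesis by blast
  qed
qed

lemma trunc_coeff: fixes f :: "rat fps" assumes n: "n > 0" and f0: "f$0 = 1"
  shows "(f^k)$n = ((Abs_fps (\<lambda>m. if m < n then f$m else 0))^k)$n + of_nat k * f$n"
proof -
  define F where "F = Abs_fps (\<lambda>m. if m < n then f$m else 0)"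
  define R0 where "R0 = Abs_fps (\<lambda>m. f$(m+n))"
  have fe: "f = F + fps_X^n * R0"
    by (auto simp: fps_eq_iff F_def R0_def fps_X_power_mult_nth)
  obtain G where G: "(F + fps_X^n * R0)^k = F^k + of_nat k * (fps_X^n * R0) * F^(k-1) + (fps_X^n * R0)^2 * G"
    using ring_pow_expand by blast
  have 1: "(of_nat k * (fps_X^n * R0) * F^(k-1)) $ n = of_nat k * f$n"
  proof -
    have "of_nat k * (fps_X^n * R0) * F^(k-1) = fps_X^n * (of_nat k * R0 * F^(k-1))"
      by (simp add: algebra_simps)
    then have "(of_nat k * (fps_X^n * R0) * F^(k-1)) $ n = (fps_X^n * (of_nat k * R0 * F^(k-1))) $ n"
      by (rule arg_cong[where f="\<lambda>x. x $ n"])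
    also have "\<dots> = (of_nat k * R0 * F^(k-1)) $ 0" by (simp add: fps_X_power_mult_nth)
    also have "\<dots> = of_nat k * f$n * (F$0)^(k-1)" by (simp add: fps_power_zeroth R0_def)
    also have "F$0 = 1" using n f0 by (simp add: F_def)
    finally show ?thesis by simp
  qed
  have 2: "((fps_X^n * R0)^2 * G) $ n = 0"
  proof -
    have e2: "(fps_X^n * R0)^2 * G = fps_X^(2*n) * (R0^2 * G)"
      by (simp add: algebra_simps power2_eq_square mult_2 power_add[symmetric])
    show ?thesis using n by (subst e2) (simp add: fps_X_power_mult_nth)
  qed
  show ?thesis unfolding F_def[symmetric] by (subst fe, subst G) (simp only: fps_add_nth 1 2 add_0_right)
qed


context fixes p :: nat assumes pp: "prime p" begin

lemma frob: "\<forall>F. pser p F \<longrightarrow> (\<forall>m\<ge>n. F$m = 0) \<longrightarrow> (\<forall>m. cong0 p ((F^p)$m - (F oo fps_X^p)$m))"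
proof (induction n)
  case 0
  have p0: "p > 0" using pp prime_gt_0_nat by blast
  show ?case
  proof (intro allI impI)
    fix F :: "rat fps" and m assume "\<forall>m\<ge>0. F $ m = 0"
    then have "F = 0" by (simp add: fps_eq_iff)
    then show "cong0 p ((F^p)$m - (F oo fps_X^p)$m)" using p0 cong0_0[OF pp] by (simp add: zero_power)
  qed
next
  case (Suc n)
  have p0: "p > 0" using pp prime_gt_0_nat by blast
  show ?case
  proof (intro allI impI)
    fix F :: "rat fps" and m
    assume pF: "pser p F" and sF: "\<forall>m\<ge>Suc n. F $ m = 0"
    define G where "G = Abs_fps (\<lambda>m. if m < n then F$m else 0)"
    define c where "c = F$n"
    define H where "H = fps_const c * fps_X^n"
    have FGH: "F = G + H"
      using sF by (auto simp: fps_eq_iff G_def H_def c_def not_less_eq_eq)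
    have pG: "pser p G" using pF pint_0[OF pp] unfolding pser_def[OF pp] G_def by auto
    have pc: "pint p c" using pF unfolding pser_def[OF pp] c_def by auto
    have pH: "pser p H" unfolding H_def using pser_mult[OF pp pser_const[OF pp pc] pser_X_power[OF pp]] .
    have IH: "cong0 p ((G^p)$m - (G oo fps_X^p)$m)"
    proof -
      have "\<forall>m\<ge>n. G$m = 0" by (simp add: G_def)
      then show ?thesis using Suc.IH pG by blast
    qed
    have Y0: "(fps_X ^ p :: rat fps) $ 0 = 0" using p0 by simp
    have HY: "H oo fps_X^p = fps_const c * fps_X^(p*n)"
      unfolding H_def using Y0
      by (simp add: fps_compose_mult_distrib fps_compose_power[symmetric] power_mult)
    have Hp: "H^p = fps_const (c^p) * fps_X^(p*n)"
      unfolding H_def by (simp add: power_mult_distrib power_mult mult.commute)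
    have H3: "cong0 p ((H^p)$m - (H oo fps_X^p)$m)"
      unfolding HY Hp using fermat_pint[OF pp pc] cong0_0[OF pp] by auto
    have bin: "(G + H)^p = (\<Sum>k\<le>p. of_nat (p choose k) * G^k * H^(p-k))"
      by (rule binomial_ring)
    have split: "{..p} = insert 0 (insert p {1..<p})" using p0 by auto
    have mid: "cong0 p ((\<Sum>k\<in>{1..<p}. of_nat (p choose k) * G^k * H^(p-k)) $ m)"
      unfolding fps_sum_nth
    proof (rule cong0_sum[OF pp])
      fix k assume k: "k \<in> {1..<p}"
      have "p dvd (p choose k)" using k pp by (intro dvd_choose_prime) auto
      moreover have "pint p ((G^k * H^(p-k)) $ m)"
        using pser_mult[OF pp pser_power[OF pp pG] pser_power[OF pp pH]] unfolding pser_def[OF pp] by blast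
      ultimately have "cong0 p (of_nat (p choose k) * (G^k * H^(p-k)) $ m)"
        using cong0_of_nat_dvd[OF pp] by blast
      then show "cong0 p ((of_nat (p choose k) * G^k * H^(p-k)) $ m)"
        by (simp add: mult.assoc fps_of_nat[symmetric])
    qed
    have "(F^p)$m = (G^p)$m + (H^p)$m + (\<Sum>k\<in>{1..<p}. of_nat (p choose k) * G^k * H^(p-k)) $ m"
      unfolding FGH bin split using p0 pp prime_gt_1_nat[OF pp]
      by (simp add: fps_sum_nth)
    moreover have "(F oo fps_X^p) $ m = (G oo fps_X^p)$m + (H oo fps_X^p)$m"
      unfolding FGH by (simp add: fps_compose_add_distrib)
    ultimately have "(F^p)$m - (F oo fps_X^p)$m = ((G^p)$m - (G oo fps_X^p)$m) + ((H^p)$m - (H oo fps_X^p)$m)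
        + (\<Sum>k\<in>{1..<p}. of_nat (p choose k) * G^k * H^(p-k)) $ m" by simp
    then show "cong0 p ((F^p)$m - (F oo fps_X^p)$m)"
      by (simp only:) (intro cong0_add[OF pp] IH H3 mid)
  qed
qed

lemma dwork: fixes f E :: "rat fps"
  assumes f0: "f$0 = 1" and fE: "f^p = (f oo fps_X^p) * E" and E0: "E$0 = 1"
    and Ec: "\<And>k. k > 0 \<Longrightarrow> cong0 p (E$k)"
  shows "pint p (f$n)"
proof (induction n rule: less_induct)
  case (less n)
  have p0: "p > 0" using pp prime_gt_0_nat by blast
  have p1: "p > 1" using pp prime_gt_1_nat by blast
  show ?case
  proof (cases "n = 0")
    case True then show ?thesis using f0 pint_1[OF pp] by simp
  next
    case False
    then have n0: "n > 0" by simp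
    define F where "F = Abs_fps (\<lambda>m. if m < n then f$m else 0)"
    have pF: "pser p F" unfolding pser_def[OF pp] F_def using less pint_0[OF pp] by auto
    have tr: "(f^p)$n = (F^p)$n + of_nat p * f$n" using trunc_coeff[OF n0 f0] F_def by simp
    have ndiv: "n div p < n" using n0 p1 by simp
    have fY_pint: "pint p ((f oo fps_X^p) $ i)" if "i < n" for i
    proof (cases "p dvd i")
      case True
      have "i div p < n" using that div_le_dividend[of i p] by linarith
      then show ?thesis using True comp_Y_nth[OF pp, of p f i] p0 less by simp
    next
      case False
      then show ?thesis using comp_Y_nth[OF pp, of p f i] p0 pint_0[OF pp] by simp
    qed
    have fYn: "(f oo fps_X^p) $ n = (F oo fps_X^p) $ n"
      using comp_Y_nth[OF pp, of p f n] comp_Y_nth[OF pp, of p F n] p0 ndiv by (simp add: F_def)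
    have "((f oo fps_X^p) * E) $ n = (\<Sum>i=0..n. (f oo fps_X^p)$i * E$(n-i))"
      by (rule fps_mult_nth)
    also have "\<dots> = (\<Sum>i\<in>{0..<n}. (f oo fps_X^p)$i * E$(n-i)) + (f oo fps_X^p)$n"
      using E0 by (simp add: sum.atLeast0_atMost_Suc atLeast0LessThan[symmetric] atLeastLessThanSuc_atLeastAtMost[symmetric] del: atLeastLessThanSuc_atLeastAtMost)
    finally have A: "((f oo fps_X^p) * E) $ n = (\<Sum>i\<in>{0..<n}. (f oo fps_X^p)$i * E$(n-i)) + (F oo fps_X^p)$n"
      using fYn by simp
    have B: "cong0 p (\<Sum>i\<in>{0..<n}. (f oo fps_X^p)$i * E$(n-i))"
      by (rule cong0_sum[OF pp]) (auto intro!: cong0_mult'[OF pp] fY_pint Ec)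
    have C: "cong0 p ((F^p)$n - (F oo fps_X^p)$n)"
    proof -
      have "\<forall>m\<ge>n. F$m = 0" by (simp add: F_def)
      then show ?thesis using frob[of n] pF by blast
    qed
    have "of_nat p * f$n = (\<Sum>i\<in>{0..<n}. (f oo fps_X^p)$i * E$(n-i)) - ((F^p)$n - (F oo fps_X^p)$n)"
      using tr A fE by simp
    then have "cong0 p (of_nat p * f$n)" by (simp only:) (intro cong0_diff[OF pp] B C)
    then show ?thesis by (rule cong0_div[OF pp])
  qed
qed

end


lemma ode_unique: fixes y z h :: "rat fps"
  assumes y: "fps_deriv y = h * y" and z: "fps_deriv z = h * z" and yz0: "y$0 = z$0"
  shows "y = z"
proof -
  have "y$n = z$n" for n
  proof (induction n rule: less_induct)
    case (less n)
    show ?case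
    proof (cases n)
      case 0 then show ?thesis using yz0 by simp
    next
      case (Suc k)
      have "(h * y) $ k = (h * z) $ k" unfolding fps_mult_nth
        using less Suc by (intro sum.cong refl) auto
      then have "fps_deriv y $ k = fps_deriv z $ k" using y z by simp
      then have "of_nat (k+1) * y $ (k+1) = of_nat (k+1) * z $ (k+1)" by simp
      then show ?thesis using Suc by (simp del: of_nat_Suc)
    qed
  qed
  then show ?thesis by (simp add: fps_eq_iff)
qed

context fixes p :: nat assumes pp: "prime p" begin

lemma AH_log0: "AH_log p $ 0 = 0"
  using pp by (auto simp: AH_log_def prime_gt_0_nat)

lemma AH_log_rel: "fps_const (of_nat p) * AH_log p = (AH_log p oo fps_X^p) + fps_const (of_nat p) * fps_X"
proof -
  have p1: "p > 1" using pp prime_gt_1_nat by auto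
  then have p0: "p > 0" by simp
  have L: "AH_log p $ m = (if (\<exists>i. m = p^i) then 1 / of_nat m else 0)" for m
    by (simp add: AH_log_def)
  have "of_nat p * AH_log p $ m = (if p dvd m then AH_log p $ (m div p) else 0) + of_nat p * (if m = 1 then 1 else 0)" for m
  proof (cases "m = 1")
    case True
    have "\<exists>i. (1::nat) = p^i" by (intro exI[of _ 0]) simp
    then show ?thesis using True p1 by (simp add: L)
  next
    case m1: False
    show ?thesis
    proof (cases "\<exists>i. m = p^i")
      case True
      then obtain i where i: "m = p^i" by blast
      with m1 obtain j where j: "i = Suc j" by (cases i) auto
      have m: "m = p * p^j" using i j by simp
      have d: "p dvd m" "m div p = p^j" using m p0 by auto
      have "\<exists>i'. p^j = p^i'" by blast
      then show ?thesis using m1 True d p0 unfolding L by (simp add: m)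
    next
      case False
      have "\<not> (\<exists>i. m div p = p^i)" if "p dvd m"
      proof
        assume "\<exists>i. m div p = p^i"
        then obtain i where "m div p = p^i" by blast
        then have "m = p^(Suc i)" using that by (metis dvd_mult_div_cancel power_Suc)
        then show False using False by blast
      qed
      then show ?thesis using m1 False unfolding L by auto
    qed
  qed
  then show ?thesis
    by (simp add: fps_eq_iff comp_Y_nth[OF pp p0] fps_X_nth)
qed

lemma AH0: "AH p $ 0 = 1"
  by (simp add: AH_def AH_log0)

lemma AH_rel: "(AH p)^p = (AH p oo fps_X^p) * fps_exp (of_nat p)"
proof -
  have p0: "p > 0" using pp prime_gt_0_nat by auto
  define f where "f = AH p"
  define L where "L = AH_log p"
  define Y :: "rat fps" where "Y = fps_X^p"
  define E :: "rat fps" where "E = fps_exp (of_nat p)"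
  define c :: "rat fps" where "c = fps_const (of_nat p)"
  have L0: "L $ 0 = 0" using AH_log0 L_def by simp
  have Y0: "Y $ 0 = 0" using p0 by (simp add: Y_def)
  have df: "fps_deriv f = f * fps_deriv L"
    unfolding f_def AH_def L_def[symmetric] using fps_compose_deriv[OF L0, of "fps_exp 1"] by simp
  have key: "c * fps_deriv L = (fps_deriv L oo Y) * fps_deriv Y + c"
  proof -
    have "fps_deriv (c * L) = fps_deriv ((L oo Y) + c * fps_X)"
      using AH_log_rel unfolding c_def L_def Y_def by simp
    then show ?thesis using fps_compose_deriv[OF Y0, of L] by (simp add: c_def)
  qed
  have dy: "fps_deriv (f^p) = (c * fps_deriv L) * f^p"
  proof -
    have "fps_deriv (f^p) = c * fps_deriv f * f^(p-1)" by (simp add: fps_deriv_power c_def)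
    also have "\<dots> = (c * fps_deriv L) * (f * f^(p-1))" by (simp add: df algebra_simps)
    also have "f * f^(p-1) = f^p" using p0 by (cases p) auto
    finally show ?thesis .
  qed
  have dz: "fps_deriv ((f oo Y) * E) = (c * fps_deriv L) * ((f oo Y) * E)"
  proof -
    have dE: "fps_deriv E = c * E" by (simp add: E_def c_def)
    have "fps_deriv ((f oo Y) * E) = ((fps_deriv f oo Y) * fps_deriv Y) * E + (f oo Y) * (c * E)"
      unfolding fps_deriv_mult dE fps_compose_deriv[OF Y0] by (simp only: add.commute)
    also have "fps_deriv f oo Y = (f oo Y) * (fps_deriv L oo Y)"
      unfolding df by (rule fps_compose_mult_distrib[OF Y0])
    finally have "fps_deriv ((f oo Y) * E) = ((fps_deriv L oo Y) * fps_deriv Y + c) * ((f oo Y) * E)"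
      by (simp add: algebra_simps)
    then show ?thesis using key by simp
  qed
  have "f^p = (f oo Y) * E"
  proof (rule ode_unique[OF dy dz])
    have "f $ 0 = 1" using AH0 f_def by simp
    then show "(f^p) $ 0 = ((f oo Y) * E) $ 0" by (simp add: fps_power_zeroth E_def)
  qed
  then show ?thesis by (simp add: f_def Y_def E_def)
qed

lemma AH_pint: "pint p (AH p $ k)"
proof (rule dwork[OF pp AH0 AH_rel])
  show "fps_exp (of_nat p) $ 0 = (1::rat)" by simp
  show "cong0 p (fps_exp (of_nat p) $ k)" if "k > 0" for k
    using E_cong[OF pp that] by simp
qed

end


context fixes p :: nat and ord :: "'k::field_char_0 \<Rightarrow> ereal"
  assumes pp: "prime p" and op: "is_ord_p p ord" begin

lemma o_mult: "ord (x*y) = ord x + ord y" using op by (simp add: is_ord_p_def)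
lemma o_add: "ord (x+y) \<ge> min (ord x) (ord y)" using op by (simp add: is_ord_p_def)
lemma o_zero: "ord 0 = \<infinity>" using op by (simp add: is_ord_p_def)
lemma o_inf: "ord x = \<infinity> \<longleftrightarrow> x = 0" using op by (simp add: is_ord_p_def)
lemma o_fin: "ord x \<noteq> -\<infinity>" using op by (simp add: is_ord_p_def)
lemma o_p: "ord (of_nat p) = 1" using op by (simp add: is_ord_p_def)

lemma o_selfdouble: assumes "x \<noteq> 0" "ord x = ord x + ord x" shows "ord x = 0"
  using assms o_inf[of x] o_fin[of x] by (cases "ord x") auto

lemma o_one: "ord 1 = 0"
  using o_selfdouble[of 1] o_mult[of 1 1] by simp

lemma o_neg1: "ord (-1) = 0"
proof -
  have "ord 1 = ord (-1) + ord (-1)" using o_mult[of "-1" "-1"] by simp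
  then have "ord (-1) + ord (-1) = 0" using o_one by simp
  then show ?thesis using o_fin[of "-1"] by (cases "ord (-1)") auto
qed

lemma o_uminus: "ord (-x) = ord x"
  using o_mult[of "-1" x] o_neg1 by simp

lemma o_nat: "ord (of_nat m) \<ge> 0"
proof (induction m)
  case 0 then show ?case using o_zero by simp
next
  case (Suc m)
  have "ord (of_nat m + 1) \<ge> min (ord (of_nat m)) (ord 1)" by (rule o_add)
  then show ?case using Suc o_one by (simp add: add.commute min_def split: if_splits)
qed

lemma o_int: "ord (of_int z) \<ge> 0"
proof (cases "z \<ge> 0")
  case True then show ?thesis using o_nat[of "nat z"] by simp
next
  case False
  then have "of_int z = - (of_nat (nat (-z)) :: 'k)" by simp
  then show ?thesis using o_nat[of "nat (-z)"] o_uminus by simp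
qed

lemma o_unit: assumes "\<not> int p dvd b" shows "ord (of_int b) = 0"
proof (rule ccontr)
  assume ne: "ord (of_int b) \<noteq> 0"
  have "coprime (int p) b" using assms pp by (intro prime_imp_coprime) auto
  then have "gcd b (int p) = 1" by (simp add: coprime_iff_gcd_eq_1 gcd.commute)
  then obtain s t where st: "s * b + t * int p = 1" using bezout_int[of b "int p"] by auto
  have "(1::'k) = of_int s * of_int b + of_int t * of_nat p"
    using arg_cong[OF st, of "of_int :: int \<Rightarrow> 'k"] by simp
  then have "ord (1::'k) \<ge> min (ord (of_int s) + ord (of_int b :: 'k)) (ord (of_int t :: 'k) + 1)"
    using o_add[of "of_int s * of_int b" "of_int t * of_nat p"] o_mult o_p by metis
  then have X: "0 \<ge> min (ord (of_int s) + ord (of_int b :: 'k)) (ord (of_int t :: 'k) + 1)"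
    using o_one by simp
  show False using X ne o_int[of s] o_int[of b] o_int[of t] o_fin[of "of_int s"] o_fin[of "of_int b"] o_fin[of "of_int t"]
    by (cases "ord (of_int s :: 'k)"; cases "ord (of_int b :: 'k)"; cases "ord (of_int t :: 'k)") (auto simp: min_def split: if_splits)
qed

lemma o_rat: assumes "pint p x" shows "ord (of_rat x) \<ge> 0"
proof -
  obtain a b where ab: "\<not> int p dvd b" "x = of_int a / of_int b" using assms pint_def by auto
  have b0: "b \<noteq> 0" using ab by auto
  have "(of_int a :: 'k) = of_rat x * of_int b" using b0 by (simp add: ab of_rat_divide)
  then have "ord (of_int a :: 'k) = ord (of_rat x) + ord (of_int b :: 'k)" using o_mult by simp
  then have "ord (of_rat x :: 'k) = ord (of_int a :: 'k)" using o_unit[OF ab(1)] by simp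
  then show ?thesis using o_int by simp
qed

lemma lb_mult: "ord x \<ge> ereal r \<Longrightarrow> ord y \<ge> ereal s \<Longrightarrow> ord (x*y) \<ge> ereal (r+s)"
  using o_mult[of x y] by (metis add_mono plus_ereal.simps(1))

lemma lb_sum: "(\<And>i. i \<in> S \<Longrightarrow> ord (f i) \<ge> ereal r) \<Longrightarrow> ord (sum f S) \<ge> ereal r"
proof (induction S rule: infinite_finite_induct)
  case (infinite S) then show ?case using o_zero by simp
next
  case empty then show ?case using o_zero by simp
next
  case (insert i S)
  then have "ord (f i) \<ge> ereal r" "ord (sum f S) \<ge> ereal r" by auto
  then have "ereal r \<le> min (ord (f i)) (ord (sum f S))" by simp
  then have "ereal r \<le> ord (f i + sum f S)" using o_add order_trans by blast
  then show ?case using insert.hyps by simp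
qed

lemma lb_prod: "(\<And>i. i \<in> S \<Longrightarrow> ord (f i) \<ge> ereal (r i)) \<Longrightarrow> ord (prod f S) \<ge> ereal (sum r S)"
proof (induction S rule: infinite_finite_induct)
  case (infinite S) then show ?case using o_one by simp
next
  case empty then show ?case using o_one by simp
next
  case (insert i S)
  then have "ord (f i) \<ge> ereal (r i)" "ord (prod f S) \<ge> ereal (sum r S)" by auto
  then show ?case using insert lb_mult by simp
qed

lemma o_pow: assumes "ord x = ereal r" shows "ord (x^k) = ereal (real k * r)"
proof (induction k)
  case 0 then show ?case using o_one by simp
next
  case (Suc k) then show ?case using o_mult[of x "x^k"] assms by (simp add: algebra_simps)
qed

lemma o_lam: assumes "lam ^ (p^a) = lam" "a \<ge> 1" shows "ord (lam ^ m) \<ge> 0"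
proof (cases "lam = 0")
  case True then show ?thesis using o_zero o_one by (cases m) auto
next
  case False
  then obtain r where r: "ord lam = ereal r" using o_inf[of lam] o_fin[of lam] by (cases "ord lam") auto
  have "ereal (real (p^a) * r) = ereal r" using o_pow[OF r, of "p^a"] assms(1) r by simp
  then have "real (p^a) * r = r" by simp
  moreover have "real (p^a) \<ge> 2"
  proof -
    have "1 \<le> p" using prime_gt_1_nat[OF pp] by simp
    then have "p^a \<ge> p^1" using assms(2) by (intro power_increasing) auto
    then show ?thesis using pp prime_ge_2_nat by (metis of_nat_le_iff of_nat_numeral order_trans power_one_right)
  qed
  ultimately have "(real (p^a) - 1) * r = 0" "real (p^a) - 1 \<noteq> 0" by (auto simp: algebra_simps)
  then have "r = 0" by simp
  then show ?thesis using o_pow[OF r, of m] by simp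
qed

end


lemma comb:
  fixes p a n d N :: nat and A :: "nat \<Rightarrow> nat \<Rightarrow> nat" and k :: "nat \<times> nat \<Rightarrow> nat"
    and u v :: "nat \<Rightarrow> nat" and I :: "nat set"
  assumes p2: "p \<ge> 2" and a1: "a \<ge> 1" and d1: "d \<ge> 1"
    and Asum: "\<forall>j<N. (\<Sum>l\<le>n. A j l) = d"
    and I: "I \<subseteq> {0..n}" and u: "u \<in> U n d I" and v: "v \<in> U n d I"
    and top: "(\<Sum>i<a. \<Sum>j<N. int (k (i,j) * p^i)) = int (p^a * u (n+1)) - int (v (n+1))"
    and coord: "\<forall>l\<le>n. (\<Sum>i<a. \<Sum>j<N. int (k (i,j) * p^i * A j l)) = int (p^a * u l) - int (v l)"
  shows "int (\<Sum>i<a. \<Sum>j<N. k (i,j)) \<ge> int p * int (u (n+1)) - int (v (n+1))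
           + (int p - 1) * (int a - 1) * (mu d I + 1)"
proof -
  define P where "P = int p"
  define u' where "u' = int (u (n+1))"
  define v' where "v' = int (v (n+1))"
  define K where "K i = (\<Sum>j<N. int (k (i,j)))" for i
  define c where "c i l = (\<Sum>j<N. int (k (i,j) * A j l))" for i l
  define T where "T m = (\<Sum>t<a-m. K (m+t) * P^t)" for m
  define Tl where "Tl m l = (\<Sum>t<a-m. c (m+t) l * P^t)" for m l
  define D where "D m = P^(a-m) * u' - T m" for m
  have P2: "P \<ge> 2" using p2 by (simp add: P_def)
  have T_rec: "T m = K m + P * T (Suc m)" if "m < a" for m
  proof -
    have e: "a - m = Suc (a - Suc m)" using that by simp
    show ?thesis unfolding T_def e sum.lessThan_Suc_shift
      by (simp add: sum_distrib_left algebra_simps)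
  qed
  have K_D: "K m = P * D (Suc m) - D m" if "m < a" for m
  proof -
    have e: "P^(a-m) = P * P^(a - Suc m)" using that by (simp add: Suc_diff_Suc power_Suc[symmetric])
    show ?thesis unfolding D_def using T_rec[OF that] e by (simp add: algebra_simps)
  qed
  have tele: "(\<Sum>m<r. K m) + D 0 = D r + (P - 1) * (\<Sum>m<r. D (Suc m))" if "r \<le> a" for r
    using that
  proof (induction r)
    case 0 then show ?case by simp
  next
    case (Suc r)
    then have "(\<Sum>m<Suc r. K m) + D 0 = D r + (P - 1) * (\<Sum>m<r. D (Suc m)) + K r" by simp
    also have "\<dots> = D (Suc r) + (P - 1) * (\<Sum>m<Suc r. D (Suc m))"
      using K_D[of r] Suc.prems by (simp add: algebra_simps)
    finally show ?case .
  qed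
  have T0: "T 0 = int (p^a * u (n+1)) - int (v (n+1))"
    unfolding top[symmetric] T_def K_def P_def by (simp add: sum_distrib_right)
  have D0: "D 0 = v'" unfolding D_def T0 by (simp add: u'_def v'_def P_def)
  have Da: "D a = u'" unfolding D_def T_def by simp
  have usum0: "(\<Sum>l\<le>n. u l) = d * u (n+1)" using u by (simp add: U_def)
  have usum: "(\<Sum>l\<le>n. int (u l)) = int d * int (u (n+1))"
    using arg_cong[OF usum0, of int] by simp
  have csum: "(\<Sum>l\<le>n. c i l) = int d * K i" for i
  proof -
    have "(\<Sum>l\<le>n. c i l) = (\<Sum>j<N. int (k (i,j)) * int (\<Sum>l\<le>n. A j l))"
      unfolding c_def by (subst sum.swap) (simp add: sum_distrib_left)
    also have "\<dots> = (\<Sum>j<N. int (k (i,j)) * int d)" using Asum by (intro sum.cong) auto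
    finally show ?thesis by (simp add: K_def sum_distrib_left ac_simps)
  qed
  have Tlsum: "(\<Sum>l\<le>n. Tl m l) = int d * T m" for m
  proof -
    have "(\<Sum>l\<le>n. Tl m l) = (\<Sum>t<a-m. (\<Sum>l\<le>n. c (m+t) l) * P^t)"
      unfolding Tl_def by (subst sum.swap) (simp add: sum_distrib_right)
    also have "\<dots> = int d * T m" unfolding csum T_def by (simp add: sum_distrib_left algebra_simps)
    finally show ?thesis .
  qed
  have cnn: "c i l \<ge> 0" for i l unfolding c_def by (simp add: sum_nonneg)
  have coordc: "(\<Sum>i<a. c i l * P^i) = int (p^a * u l) - int (v l)" if "l \<le> n" for l
  proof -
    have "(\<Sum>i<a. c i l * P^i) = (\<Sum>i<a. \<Sum>j<N. int (k (i,j) * p^i * A j l))"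
      unfolding c_def P_def sum_distrib_right by (intro sum.cong refl) (simp add: ac_simps)
    then show ?thesis using coord that by simp
  qed
  have Tl_bd: "P^m * Tl m l \<le> int (p^a * u l) - int (v l)" if "l \<le> n" "m \<le> a" for l m
  proof -
    have "P^m * Tl m l = (\<Sum>t<a-m. c (t+m) l * P^(t+m))"
      unfolding Tl_def by (simp add: sum_distrib_left power_add algebra_simps)
    also have "\<dots> = (\<Sum>i\<in>{m..<a}. c i l * P^i)"
      using sum.shift_bounds_nat_ivl[of "\<lambda>i. c i l * P^i" 0 m "a-m"] that
      by (simp add: lessThan_atLeast0)
    also have "\<dots> \<le> (\<Sum>i<a. c i l * P^i)"
      by (rule sum_mono2) (auto simp: cnn P_def)
    finally show ?thesis using coordc[OF that(1)] by simp
  qed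
  have Dbd: "D m \<ge> mu d I + 1" if "m \<le> a" for m
  proof -
    have each: "P^(a-m) * int (u l) - Tl m l \<ge> (if l \<in> I then 1 else 0)" if l: "l \<le> n" for l
    proof -
      have vI: "l \<in> I \<Longrightarrow> v l \<ge> 1" using v by (auto simp: U_def)
      have "P^m * (P^(a-m) * int (u l) - Tl m l) = int (p^a * u l) - P^m * Tl m l"
        using \<open>m \<le> a\<close> by (simp add: P_def algebra_simps power_add[symmetric])
      also have "\<dots> \<ge> int (v l)" using Tl_bd[OF l \<open>m \<le> a\<close>] by simp
      finally have X: "P^m * (P^(a-m) * int (u l) - Tl m l) \<ge> int (v l)" .
      have Pm: "P^m > 0" using P2 by simp
      show ?thesis
      proof (cases "l \<in> I")
        case True
        then have "P^m * (P^(a-m) * int (u l) - Tl m l) > 0" using X vI by linarith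
        then have "P^(a-m) * int (u l) - Tl m l > 0" using Pm zero_less_mult_pos by blast
        then show ?thesis using True by simp
      next
        case False
        then have "P^m * (P^(a-m) * int (u l) - Tl m l) \<ge> 0" using X by linarith
        then have "P^(a-m) * int (u l) - Tl m l \<ge> 0" using Pm zero_le_mult_iff by (metis less_le_not_le)
        then show ?thesis using False by simp
      qed
    qed
    have "int (card I) = (\<Sum>l\<le>n. (if l \<in> I then 1 else 0 :: int))"
      using I by (simp add: sum.If_cases atLeast0AtMost Int_absorb1)
    also have "\<dots> \<le> (\<Sum>l\<le>n. P^(a-m) * int (u l) - Tl m l)" by (rule sum_mono) (rule each, simp)
    also have "\<dots> = P^(a-m) * int d * u' - int d * T m"
      using usum Tlsum[of m] by (simp add: sum_subtractf sum_distrib_left[symmetric] u'_def)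
    also have "\<dots> = int d * D m" by (simp add: D_def algebra_simps)
    finally have cd: "int (card I) \<le> int d * D m" .
    have "real (card I) / real d \<le> real_of_int (D m)"
    proof -
      have "real_of_int (int (card I)) \<le> real_of_int (int d * D m)" using cd by (simp only: of_int_le_iff)
      then have "real (card I) \<le> real_of_int (D m) * real d" by (simp add: mult.commute)
      moreover have "real d > 0" using d1 by simp
      ultimately show ?thesis by (simp add: pos_divide_le_eq)
    qed
    then have "\<lceil>real (card I) / real d\<rceil> \<le> D m" by (simp add: ceiling_le_iff)
    then show ?thesis by (simp add: mu_def)
  qed
  obtain a' where a': "a = Suc a'" using a1 by (cases a) auto
  have S: "(\<Sum>m<a. K m) + v' = P * u' + (P - 1) * (\<Sum>m<a'. D (Suc m))"
    using tele[of a] D0 Da unfolding a' by (simp add: algebra_simps)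
  have "(\<Sum>m<a'. D (Suc m)) \<ge> (\<Sum>m<a'. mu d I + 1)"
    by (rule sum_mono) (rule Dbd, simp add: a')
  then have "(\<Sum>m<a'. D (Suc m)) \<ge> int a' * (mu d I + 1)" by simp
  then have "(P - 1) * (\<Sum>m<a'. D (Suc m)) \<ge> (P - 1) * (int a' * (mu d I + 1))"
    using P2 by (intro mult_left_mono) auto
  moreover have "int (\<Sum>i<a. \<Sum>j<N. k (i,j)) = (\<Sum>m<a. K m)" by (simp add: K_def)
  ultimately show ?thesis using S unfolding P_def u'_def v'_def a' by (simp add: algebra_simps)
qed


theorem corollary3p26:
  fixes p a n d N :: nat and A :: "nat \<Rightarrow> nat \<Rightarrow> nat"
    and ord :: "'k::field_char_0 \<Rightarrow> ereal" and \<gamma>0 :: 'k and lam :: "nat \<Rightarrow> 'k"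
    and I :: "nat set" and u v :: "nat \<Rightarrow> nat"
  assumes "prime p" and "a \<ge> 1" and "n \<ge> 1" and "d \<ge> 2" and "N \<ge> 1"
    and "\<forall>j<N. (\<Sum>l\<le>n. A j l) = d"
    and "is_ord_p p ord"
    and "is_gamma0 p ord \<gamma>0"
    and "\<forall>j<N. lam j ^ (p ^ a) = lam j"
    and "I \<subseteq> {0..n}"
    and "u \<in> U n d I" and "v \<in> U n d I"
  shows "ord (theta0_coeff p a n N A \<gamma>0 lam (\<lambda>l. int (p ^ a * u l) - int (v l)))
           \<ge> ereal ((real p * real (u (n+1)) - real (v (n+1))) / (real p - 1)
                    + (real a - 1) * (real_of_int (mu d I) + 1))"
proof -
  note pp = assms(1) and op = assms(7)
  have p2: "p \<ge> 2" using pp prime_ge_2_nat by blast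
  have pm1: "real p - 1 > 0" using p2 by simp
  have g: "ord \<gamma>0 = ereal (1 / (real p - 1))" using assms(8) by (simp add: is_gamma0_def)
  define target where "target = (real p * real (u (n+1)) - real (v (n+1))) / (real p - 1)
                    + (real a - 1) * (real_of_int (mu d I) + 1)"
  show ?thesis unfolding theta0_coeff_def target_def[symmetric]
  proof (rule lb_sum[OF pp op])
    fix k assume kS: "k \<in> {k :: nat \<times> nat \<Rightarrow> nat.
            (\<forall>i j. k (i, j) \<noteq> 0 \<longrightarrow> i < a \<and> j < N) \<and>
            (\<forall>l\<le>n+1. (\<Sum>i<a. \<Sum>j<N. int (k (i, j) * p ^ i * Aplus n A j l)) = int (p ^ a * u l) - int (v l))}"
    then have kc: "\<forall>l\<le>n+1. (\<Sum>i<a. \<Sum>j<N. int (k (i, j) * p ^ i * Aplus n A j l)) = int (p ^ a * u l) - int (v l)"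
      by blast
    have top: "(\<Sum>i<a. \<Sum>j<N. int (k (i,j) * p^i)) = int (p^a * u (n+1)) - int (v (n+1))"
      using kc[rule_format, of "n+1"] by (simp add: Aplus_def)
    have coord: "\<forall>l\<le>n. (\<Sum>i<a. \<Sum>j<N. int (k (i,j) * p^i * A j l)) = int (p^a * u l) - int (v l)"
    proof (intro allI impI)
      fix l assume l: "l \<le> n"
      then have "\<And>j. Aplus n A j l = A j l" by (simp add: Aplus_def)
      then show "(\<Sum>i<a. \<Sum>j<N. int (k (i,j) * p^i * A j l)) = int (p^a * u l) - int (v l)"
        using kc[rule_format, of l] l by simp
    qed
    have cb: "int (\<Sum>i<a. \<Sum>j<N. k (i,j)) \<ge> int p * int (u (n+1)) - int (v (n+1))
           + (int p - 1) * (int a - 1) * (mu d I + 1)"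
      by (rule comb[OF p2 assms(2) _ assms(6) assms(10) assms(11) assms(12) top coord]) (use assms(4) in simp)
    then have cbr: "real (\<Sum>i<a. \<Sum>j<N. k (i,j)) \<ge> real p * real (u (n+1)) - real (v (n+1))
           + (real p - 1) * (real a - 1) * (real_of_int (mu d I) + 1)"
      using assms(2) by (simp add: of_int_le_iff[symmetric, where 'a=real] of_nat_diff)
    have tb: "target \<le> real (\<Sum>i<a. \<Sum>j<N. k (i,j)) / (real p - 1)"
    proof -
      have "target * (real p - 1) = real p * real (u (n+1)) - real (v (n+1))
           + (real p - 1) * (real a - 1) * (real_of_int (mu d I) + 1)"
        unfolding target_def using pm1 by (simp add: field_simps)
      then have "target * (real p - 1) \<le> real (\<Sum>i<a. \<Sum>j<N. k (i,j))" using cbr by simp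
      then show ?thesis using pm1 by (simp add: pos_le_divide_eq)
    qed
    have fb: "ord (of_rat (AH p $ k (i, j)) * \<gamma>0 ^ k (i, j) * lam j ^ (k (i, j) * p ^ i))
              \<ge> ereal (0 + real (k (i,j)) * (1 / (real p - 1)) + 0)" if j: "j \<in> {..<N}" for i j
    proof (intro lb_mult[OF pp op])
      show "ord (of_rat (AH p $ k (i, j)) :: 'k) \<ge> ereal 0"
        using o_rat[OF pp op AH_pint[OF pp]] by (simp add: zero_ereal_def)
      show "ord (\<gamma>0 ^ k (i, j)) \<ge> ereal (real (k (i,j)) * (1 / (real p - 1)))"
        using o_pow[OF pp op g] by simp
      show "ord (lam j ^ (k (i, j) * p ^ i)) \<ge> ereal 0"
        using o_lam[OF pp op _ assms(2)] assms(9) j by (simp add: zero_ereal_def)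
    qed
    have P1: "ord (\<Prod>i<a. \<Prod>j<N. of_rat (AH p $ k (i, j)) * \<gamma>0 ^ k (i, j) * lam j ^ (k (i, j) * p ^ i))
        \<ge> ereal (\<Sum>i<a. \<Sum>j<N. 0 + real (k (i,j)) * (1 / (real p - 1)) + 0)"
      by (intro lb_prod[OF pp op]) (rule fb, assumption)
    have eq: "(\<Sum>i<a. \<Sum>j<N. 0 + real (k (i,j)) * (1 / (real p - 1)) + 0)
        = real (\<Sum>i<a. \<Sum>j<N. k (i,j)) / (real p - 1)"
      by (simp add: sum_distrib_right sum_divide_distrib)
    have "ereal target \<le> ereal (\<Sum>i<a. \<Sum>j<N. 0 + real (k (i,j)) * (1 / (real p - 1)) + 0)"
      unfolding eq using tb by simp
    then show "ord (\<Prod>i<a. \<Prod>j<N. of_rat (AH p $ k (i, j)) * \<gamma>0 ^ k (i, j) * lam j ^ (k (i, j) * p ^ i))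
        \<ge> ereal target" using P1 by (rule order_trans)
  qed
qed

end
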